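(* Let $\mathcal{C}_1$ be an $(n,k,d)$ code constructed from a $t$-design $(I_n,\mathcal{B})\in S_\lambda(n-d+1,r,n)$, achieving $(\bar\alpha,\bar M_1)$, and let $\mathcal{C}_2$ be the $(n,k,d)$ code constructed from the complete block design $S_{\lambda^*}(n-d+1,r,n)$, achieving $(\bar\alpha,\bar M_2)$. Then $\bar M_1\le\bar M_2$, with equality if and only if, in $(I_n,\mathcal{B})$, the quantity $T(A)$ is the same for all sets $A\subset I_n$ with $|A|=n-k$.
   Context: Exact-repair regenerating codes: $n$ disks each storing $\alpha$ symbols, any $k$ disks suffice to reconstruct $M$ information symbols, and a failed disk is repaired from $d$ helper disks; the normalized measures are $\bar\alpha=\alpha/\beta$ and $\bar M=M/\beta$, where $\beta$ is the per-helper repair amount (here the total repair bandwidth is $\gamma=d\beta$). Code construction from a $t$-design $(I_n,\mathcal{B})\in S_\lambda(t,r,n)$ with $t=n-d+1$ (blocks of size $r$, every $t$-subset of $I_n$ contained in exactly $\lambda$ blocks, $N_\lambda(t,r,n)=\lambda\binom{n}{t}\binom{r}{t}^{-1}$ blocks): for $A\subset I_n$ with $|A|=n-k$ let $T(A)=\sum_{B\in\mathcal{B}:|B\cap A|\ge t}(|B\cap A|-t+1)$ and $T=\max_{|A|=n-k}T(A)$. Information symbols (of number $M$) together with $T$ parity symbols of a first-layer linear code fill an $(r-t+1)\times N_\lambda(t,r,n)$ array; each column is extended by $t-1$ parity symbols of a fixed systematic $(r,r-t+1)$ MDS code to form a parity group of $r$ symbols, which are stored one per disk on the disks of the corresponding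 block. The parameters are $\alpha=\lambda\binom{n-1}{t-1}/\binom{r-1}{t-1}$, $\gamma=(r-t+1)\alpha$, $M=(r-t+1)N_\lambda(t,r,n)-T$. The complete block design $S_{\lambda^*}(t,r,n)$ takes all $r$-subsets of $I_n$ as blocks, with $\lambda^*=\binom{n-t}{r-t}$. *)

theory Defs
  imports Complex_Main "HOL-Library.Multiset"
begin

text \<open>A t-design S_lambda(t,r,n): a multiset of blocks (repeated
  blocks allowed), each an r-subset of I_n, such that every t-subset of I_n lies in exactly
  lambda blocks (counted with multiplicity).\<close>
definition is_t_design :: "nat \<Rightarrow> nat \<Rightarrow> nat \<Rightarrow> nat \<Rightarrow> nat set multiset \<Rightarrow> bool" where
  "is_t_design lam t r n B \<longleftrightarrow>
     (\<forall>b\<in>#B. b \<subseteq> {1..n} \<and> card b = r) \<and>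
     (\<forall>S. S \<subseteq> {1..n} \<and> card S = t \<longrightarrow> size {# b \<in># B. S \<subseteq> b #} = lam)"

definition complete_design :: "nat \<Rightarrow> nat \<Rightarrow> nat set multiset" where
  "complete_design n r = mset_set {b. b \<subseteq> {1..n} \<and> card b = r}"

definition TA :: "nat \<Rightarrow> nat set multiset \<Rightarrow> nat set \<Rightarrow> nat" where
  "TA t B A = (\<Sum>b\<in>#{# b \<in># B. t \<le> card (b \<inter> A) #}. card (b \<inter> A) - t + 1)"

definition Tmax :: "nat \<Rightarrow> nat \<Rightarrow> nat \<Rightarrow> nat set multiset \<Rightarrow> nat" where
  "Tmax n k t B = Max (TA t B ` {A. A \<subseteq> {1..n} \<and> card A = n - k})"

text \<open>Parameters of the code built from a design S_lambda(t,r,n) with t = n-d+1.\<close>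
definition num_blocks :: "nat \<Rightarrow> nat \<Rightarrow> nat \<Rightarrow> nat \<Rightarrow> real" where
  "num_blocks lam t r n = real lam * real (n choose t) / real (r choose t)"

definition code_alpha :: "nat \<Rightarrow> nat \<Rightarrow> nat \<Rightarrow> nat \<Rightarrow> real" where
  "code_alpha lam t r n = real lam * real ((n - 1) choose (t - 1)) / real ((r - 1) choose (t - 1))"

definition code_gamma :: "nat \<Rightarrow> nat \<Rightarrow> nat \<Rightarrow> nat \<Rightarrow> real" where
  "code_gamma lam t r n = real (r - t + 1) * code_alpha lam t r n"

text \<open>beta = gamma / d (per-helper repair amount).\<close>
definition code_beta :: "nat \<Rightarrow> nat \<Rightarrow> nat \<Rightarrow> nat \<Rightarrow> real" where
  "code_beta n d r lam = code_gamma lam (n - d + 1) r n / real d"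

definition code_M :: "nat \<Rightarrow> nat \<Rightarrow> nat \<Rightarrow> nat \<Rightarrow> nat \<Rightarrow> nat set multiset \<Rightarrow> real" where
  "code_M n k d r lam B =
     real (r - (n - d + 1) + 1) * num_blocks lam (n - d + 1) r n - real (Tmax n k (n - d + 1) B)"

definition code_alphabar :: "nat \<Rightarrow> nat \<Rightarrow> nat \<Rightarrow> nat \<Rightarrow> real" where
  "code_alphabar n d r lam = code_alpha lam (n - d + 1) r n / code_beta n d r lam"

definition code_Mbar :: "nat \<Rightarrow> nat \<Rightarrow> nat \<Rightarrow> nat \<Rightarrow> nat \<Rightarrow> nat set multiset \<Rightarrow> real" where
  "code_Mbar n k d r lam B = code_M n k d r lam B / code_beta n d r lam"

end

theory Submission imports Defs begin
lemma exists_perm: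
  assumes "finite U" "X \<subseteq> U" "Y \<subseteq> U" "card X = card Y"
  shows "\<exists>p. bij_betw p U U \<and> p ` X = Y"
proof -
  have fX: "finite X" "finite Y" using assms finite_subset by auto
  obtain f where f: "bij_betw f X Y" using finite_same_card_bij[OF fX assms(4)] by blast
  have "card (U - X) = card (U - Y)"
    using assms fX by (simp add: card_Diff_subset)
  then obtain g where g: "bij_betw g (U - X) (U - Y)"
    using finite_same_card_bij[of "U-X" "U-Y"] assms by auto
  define p where "p x = (if x \<in> X then f x else g x)" for x
  have 1: "bij_betw p X Y" using f by (rule bij_betw_cong[THEN iffD1, rotated]) (simp add: p_def)
  have 2: "bij_betw p (U-X) (U-Y)" using g by (rule bij_betw_cong[THEN iffD1, rotated]) (simp add: p_def)
  have "bij_betw p (X \<union> (U - X)) (Y \<union> (U - Y))"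
    by (rule bij_betw_combine[OF 1 2]) auto
  moreover have "X \<union> (U - X) = U" "Y \<union> (U - Y) = U" using assms by auto
  ultimately show ?thesis using 1 by (auto simp: bij_betw_def)
qed

lemma sum_sym:
  assumes "finite U" "X \<subseteq> U" "Y \<subseteq> U" "card X = card Y"
  shows "(\<Sum>A\<in>{A. A \<subseteq> U \<and> card A = m}. h (card (X \<inter> A)))
       = (\<Sum>A\<in>{A. A \<subseteq> U \<and> card A = m}. (h (card (Y \<inter> A)) :: 'b::comm_monoid_add))"
proof -
  obtain p where p: "bij_betw p U U" "p ` X = Y" using exists_perm[OF assms] by blast
  have inj: "inj_on p U" and im: "p ` U = U" using p by (auto simp: bij_betw_def)
  define q where "q = inv_into U p"
  have q: "bij_betw q U U" unfolding q_def using p(1) by (rule bij_betw_inv_into)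
  have injq: "inj_on q U" and imq: "q ` U = U" using q by (auto simp: bij_betw_def)
  let ?S = "{A. A \<subseteq> U \<and> card A = m}"
  show ?thesis
  proof (rule sum.reindex_bij_witness[of ?S "\<lambda>A. q ` A" "\<lambda>A. p ` A"])
    fix a assume a: "a \<in> ?S"
    then show "q ` p ` a = a" using inj unfolding q_def by auto
    show "p ` a \<in> ?S" using a im inj by (auto simp: card_image inj_on_subset)
    have "Y \<inter> p ` a = p ` (X \<inter> a)" using p(2) inj a assms(2) by (simp add: inj_on_image_Int)
    then show "h (card (Y \<inter> p ` a)) = h (card (X \<inter> a))"
    proof -
      have "inj_on p (X \<inter> a)" using inj_on_subset[OF inj, of "X \<inter> a"] a by auto
      then show ?thesis using \<open>Y \<inter> p ` a = p ` (X \<inter> a)\<close> by (simp add: card_image)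
    qed
  next
    fix b assume b: "b \<in> ?S"
    then show "p ` q ` b = b" unfolding q_def using im by (simp add: image_inv_into_cancel)
    show "q ` b \<in> ?S" using b imq injq by (auto simp: card_image inj_on_subset)
  qed
qed

lemma sum_mset_filter_if:
  "(\<Sum>x\<in>#filter_mset P M. g x) = (\<Sum>x\<in>#M. if P x then g x else (0::'b::comm_monoid_add))"
  by (induction M) auto

lemma sum_mset_sum_swap:
  "(\<Sum>x\<in>#M. \<Sum>y\<in>S. f x y) = (\<Sum>y\<in>S. \<Sum>x\<in>#M. (f x y :: 'b::comm_monoid_add))"
  by (induction M) (auto simp: sum.distrib)

lemma size_filter_sum:
  "size (filter_mset P M) = (\<Sum>x\<in>#M. if P x then 1 else (0::nat))"
  by (induction M) auto

lemma max_avg: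
  fixes v :: "'a \<Rightarrow> nat"
  assumes "finite S" "S \<noteq> {}"
  shows "sum v S \<le> card S * Max (v ` S)"
    and "card S * Max (v ` S) = sum v S \<longleftrightarrow> (\<exists>c. \<forall>x\<in>S. v x = c)"
proof -
  have le: "\<forall>x\<in>S. v x \<le> Max (v ` S)" using assms by auto
  have "sum v S \<le> sum (\<lambda>_. Max (v ` S)) S" using le by (intro sum_mono) auto
  then show "sum v S \<le> card S * Max (v ` S)" by simp
  show "card S * Max (v ` S) = sum v S \<longleftrightarrow> (\<exists>c. \<forall>x\<in>S. v x = c)"
  proof
    assume eq: "card S * Max (v ` S) = sum v S"
    show "\<exists>c. \<forall>x\<in>S. v x = c"
    proof (rule ccontr)
      assume "\<not> ?thesis"
      then obtain x where "x \<in> S" "v x \<noteq> Max (v ` S)" by blast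
      with le have "\<exists>x\<in>S. v x < Max (v ` S)" by force
      then have "sum v S < sum (\<lambda>_. Max (v ` S)) S"
        using sum_strict_mono_ex1[OF assms(1) le] by blast
      with eq show False by simp
    qed
  next
    assume "\<exists>c. \<forall>x\<in>S. v x = c"
    then obtain c where c: "\<forall>x\<in>S. v x = c" by blast
    then have "v ` S = {c}" using assms by auto
    then show "card S * Max (v ` S) = sum v S" using c by simp
  qed
qed

lemma Mbar_form:
  assumes "0 < lm" "0 < d" "0 < (r - t + 1)" "0 < (r choose t)" "0 < ((r-1) choose (t-1))"
    "0 < ((n-1) choose (t-1))" "t = n - d + 1"
  shows "code_Mbar n k d r lm M =
     (real d * real ((r-1) choose (t-1)) / (real (r-t+1) * real ((n-1) choose (t-1)))) *
     (real (r-t+1) * real (n choose t) / real (r choose t) - real (Tmax n k t M) / real lm)"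
  using assms unfolding code_Mbar_def code_M_def code_beta_def code_gamma_def code_alpha_def num_blocks_def
  by (simp add: field_simps)

theorem mainTheorem5:
  fixes n k d r lam :: nat and B :: "nat set multiset"
  assumes "1 \<le> k" and "k \<le> d" and "d < n"
    and "n - d + 1 \<le> r" and "r \<le> n"
    and "0 < lam"
    and "is_t_design lam (n - d + 1) r n B"
  shows "code_Mbar n k d r lam B
           \<le> code_Mbar n k d r ((n - (n - d + 1)) choose (r - (n - d + 1))) (complete_design n r)
       \<and> (code_Mbar n k d r lam B
            = code_Mbar n k d r ((n - (n - d + 1)) choose (r - (n - d + 1))) (complete_design n r)
          \<longleftrightarrow> (\<exists>c. \<forall>A. A \<subseteq> {1..n} \<and> card A = n - k \<longrightarrow> TA (n - d + 1) B A = c))"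
proof -
  define t where "t = n - d + 1"
  define a where "a = n - k"
  define U where "U = {1..n::nat}"
  define AA where "AA = {A. A \<subseteq> U \<and> card A = a}"
  define Bs where "Bs = {b. b \<subseteq> U \<and> card b = r}"
  define L where "L = (n - t) choose (r - t)"
  define f where "f j = (if t \<le> j then j - t + 1 else 0)" for j :: nat
  have tr: "t \<le> r" "t \<ge> 2" using assms unfolding t_def by auto
  have an: "a \<le> n" unfolding a_def by simp
  have finU: "finite U" "card U = n" unfolding U_def by auto
  have cardAA: "card AA = n choose a" unfolding AA_def using n_subsets[OF finU(1)] finU by simp
  have cardBs: "card Bs = n choose r" unfolding Bs_def using n_subsets[OF finU(1)] finU by simp
  have finAA: "finite AA" unfolding AA_def using finU by auto
  have finBs: "finite Bs" unfolding Bs_def using finU by auto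
  have A0: "{1..a} \<in> AA" unfolding AA_def U_def using an by auto
  have b0: "{1..r} \<in> Bs" unfolding Bs_def U_def using assms by auto
  have AAne: "AA \<noteq> {}" using A0 by auto
  have des: "\<forall>b\<in>#B. b \<subseteq> U \<and> card b = r"
    "\<forall>S. S \<subseteq> U \<and> card S = t \<longrightarrow> size {# b \<in># B. S \<subseteq> b #} = lam"
    using assms(7) unfolding is_t_design_def t_def U_def by auto
  have TAeq: "TA t M A = (\<Sum>b\<in>#M. f (card (b \<inter> A)))" for M A
    unfolding TA_def f_def by (rule sum_mset_filter_if)
  define G where "G b = (\<Sum>A\<in>AA. f (card (b \<inter> A)))" for b
  define H where "H A = (\<Sum>b\<in>Bs. f (card (A \<inter> b)))" for A
  have Gc: "G b = G {1..r}" if "b \<in> Bs" for b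
    unfolding G_def AA_def using sum_sym[OF finU(1), of b "{1..r}"] that b0 unfolding Bs_def by auto
  have Hc: "H A = H {1..a}" if "A \<in> AA" for A
    unfolding H_def Bs_def using sum_sym[OF finU(1), of A "{1..a}"] that A0 unfolding AA_def by auto
  have sum1: "(\<Sum>A\<in>AA. TA t B A) = size B * G {1..r}"
  proof -
    have "(\<Sum>A\<in>AA. TA t B A) = (\<Sum>b\<in>#B. G b)"
      unfolding TAeq G_def by (simp add: sum_mset_sum_swap)
    also have "\<dots> = (\<Sum>b\<in>#B. G {1..r})"
      by (rule arg_cong[where f=sum_mset], rule image_mset_cong) (use des Gc Bs_def in auto)
    finally show ?thesis by simp
  qed
  have TAc: "TA t (complete_design n r) A = H A" for A
    unfolding TAeq H_def complete_design_def Bs_def U_def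
    by (simp add: sum_unfold_sum_mset Int_commute)
  have sum2: "card AA * H {1..a} = card Bs * G {1..r}"
  proof -
    have "card AA * H {1..a} = (\<Sum>A\<in>AA. H A)" using Hc by simp
    also have "\<dots> = (\<Sum>b\<in>Bs. G b)" unfolding H_def G_def
      by (subst sum.swap) (simp add: Int_commute)
    also have "\<dots> = card Bs * G {1..r}" using Gc by simp
    finally show ?thesis .
  qed
  have T2: "Tmax n k t (complete_design n r) = H {1..a}"
  proof -
    have "TA t (complete_design n r) ` AA = {H {1..a}}" using Hc AAne TAc by auto
    then show ?thesis unfolding Tmax_def AA_def a_def U_def by simp
  qed
  define T1 where "T1 = Tmax n k t B"
  have T1def: "T1 = Max (TA t B ` AA)" unfolding T1_def Tmax_def AA_def a_def U_def by simp
  have ma1: "size B * G {1..r} \<le> card AA * T1"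
    using max_avg(1)[OF finAA AAne, of "TA t B"] sum1 T1def by simp
  have ma2: "card AA * T1 = size B * G {1..r} \<longleftrightarrow> (\<exists>c. \<forall>A\<in>AA. TA t B A = c)"
    using max_avg(2)[OF finAA AAne, of "TA t B"] sum1 T1def by simp
  define TS where "TS = {S. S \<subseteq> U \<and> card S = t}"
  have dc: "size B * (r choose t) = lam * (n choose t)"
  proof -
    have "size B * (r choose t) = (\<Sum>b\<in>#B. card {S. S \<subseteq> b \<and> card S = t})"
    proof -
      have "(\<Sum>b\<in>#B. card {S. S \<subseteq> b \<and> card S = t}) = (\<Sum>b\<in>#B. r choose t)"
        apply (rule arg_cong[where f=sum_mset], rule image_mset_cong)
        using des(1) n_subsets finU(1) finite_subset by metis
      then show ?thesis by simp
    qed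
    also have "\<dots> = (\<Sum>b\<in>#B. \<Sum>S\<in>TS. if S \<subseteq> b then 1 else 0)"
    proof (rule arg_cong[where f=sum_mset], rule image_mset_cong)
      fix b assume "b \<in># B"
      then have bU: "b \<subseteq> U" using des by auto
      have "{S. S \<subseteq> b \<and> card S = t} = {S\<in>TS. S \<subseteq> b}" unfolding TS_def using bU by auto
      then show "card {S. S \<subseteq> b \<and> card S = t} = (\<Sum>S\<in>TS. if S \<subseteq> b then 1 else 0)"
        by (simp add: sum.If_cases TS_def finU Int_def conj_commute conj_left_commute)
    qed
    also have "\<dots> = (\<Sum>S\<in>TS. size {# b \<in># B. S \<subseteq> b #})"
      by (simp add: sum_mset_sum_swap size_filter_sum)
    also have "\<dots> = (\<Sum>S\<in>TS. lam)" using des(2) unfolding TS_def by simp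
    also have "\<dots> = lam * (n choose t)" using n_subsets[OF finU(1)] finU unfolding TS_def by simp
    finally show ?thesis .
  qed
  have cm: "(n choose r) * (r choose t) = (n choose t) * L"
    unfolding L_def using choose_mult[of t r n] tr assms by simp
  have pd: "0 < d" using assms by simp
  have pr: "0 < r - t + 1" by simp
  have pcr: "0 < r choose t" using tr by simp
  have pcr1: "0 < (r-1) choose (t-1)" using tr by simp
  have pcn1: "0 < (n-1) choose (t-1)" using tr assms by simp
  have pL: "0 < L" unfolding L_def using tr assms by simp
  have pc: "0 < card AA" using cardAA an by simp
  have Lid: "(n - (n - d + 1)) choose (r - (n - d + 1)) = L" unfolding L_def t_def by simp
  define K1 where "K1 = real d * real ((r-1) choose (t-1)) / (real (r-t+1) * real ((n-1) choose (t-1)))"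
  define K2 where "K2 = real (r-t+1) * real (n choose t) / real (r choose t)"
  have K1: "K1 > 0" unfolding K1_def using pd pcr1 pcn1 by simp
  have M1: "code_Mbar n k d r lam B = K1 * (K2 - real T1 / real lam)"
    unfolding K1_def K2_def T1_def
    using Mbar_form[OF assms(6) pd pr pcr pcr1 pcn1 t_def] by simp
  have M2: "code_Mbar n k d r L (complete_design n r) = K1 * (K2 - real (H {1..a}) / real L)"
    unfolding K1_def K2_def T2[symmetric]
    using Mbar_form[OF pL pd pr pcr pcr1 pcn1 t_def] by simp
  define mu where "mu = real (n choose t) * real (G {1..r}) / (real (r choose t) * real (card AA))"
  have e2: "real (H {1..a}) / real L = mu"
  proof -
    have "real (card AA) * real (H {1..a}) = real (card Bs) * real (G {1..r})"
      using sum2 by (metis of_nat_mult)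
    moreover have "real (n choose r) * real (r choose t) = real (n choose t) * real L"
      using cm by (metis of_nat_mult)
    ultimately show ?thesis unfolding mu_def cardBs using pc pL pcr
      by (simp add: field_simps) (metis mult.assoc mult.commute)
  qed
  have sB: "real (size B) * real (r choose t) = real lam * real (n choose t)"
    using dc by (metis of_nat_mult)
  have mu2: "mu = real (size B) * real (G {1..r}) / (real lam * real (card AA))"
    unfolding mu_def using sB assms(6) pc pcr
    by (simp add: divide_simps)
  have e1: "real T1 / real lam \<ge> mu \<and> (real T1 / real lam = mu \<longleftrightarrow> card AA * T1 = size B * G {1..r})"
  proof -
    have l0: "real lam > 0" "real (card AA) > 0" using assms(6) pc by auto
    have eq: "real T1 / real lam = real (card AA * T1) / (real lam * real (card AA))"
      using l0 by (simp add: field_simps)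
    have mu3: "mu = real (size B * G {1..r}) / (real lam * real (card AA))" using mu2 by simp
    have p: "real lam * real (card AA) > 0" using l0 by simp
    have "real T1 / real lam \<ge> mu \<longleftrightarrow> real (size B * G {1..r}) \<le> real (card AA * T1)"
      using p by (simp only: eq mu3 divide_le_cancel) auto
    moreover have "real T1 / real lam = mu \<longleftrightarrow> real (card AA * T1) = real (size B * G {1..r})"
      using p by (simp only: eq mu3 divide_cancel_right) auto
    ultimately show ?thesis using ma1 by (simp only: of_nat_le_iff of_nat_eq_iff)
  qed
  have cond: "(\<exists>c. \<forall>A\<in>AA. TA t B A = c) \<longleftrightarrow>
      (\<exists>c. \<forall>A. A \<subseteq> {1..n} \<and> card A = n - k \<longrightarrow> TA (n - d + 1) B A = c)"
    unfolding AA_def U_def a_def t_def by auto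
  show ?thesis
    unfolding Lid M1 M2 e2 using e1 ma2 cond K1 by auto
qed

end
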